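(* Let $\kappa$ be a regular uncountable cardinal, $J$ a $\kappa$-complete ideal on $\kappa$, and $\sigma<\kappa$ an infinite cardinal. If $\curlywedge^-(\sigma,\kappa,J)$ holds, then so does $\curlywedge^-(\sigma',\kappa,J)$ for every cardinal $\sigma'$ with $\sigma\leq\sigma'<\kappa$.
   Context: An ideal on $\kappa$ is a nonempty $J \subseteq P(\kappa)$ with $\kappa \notin J$, every bounded subset of $\kappa$ in $J$, $J$ closed under subsets and under unions of two members; $J^+ = P(\kappa)\setminus J$; $\kappa$-complete means closed under unions of fewer than $\kappa$ members. $acc(\kappa)$ is the set of nonzero limit ordinals below $\kappa$; $P_\sigma(X)=\{x\subseteq X:|x|<\sigma\}$. For an infinite cardinal $\sigma$ and a limit ordinal $\delta\geq\sigma$, a subset $C$ of $P_\sigma(\delta)$ is a generalized club if there is $F:P_\omega(\delta)\to\delta$ with $\{x\in P_\sigma(\delta) : F``P_\omega(x)\subseteq x\}\subseteq C$. $\curlywedge^-(\sigma,\kappa,J)$ asserts the existence, for $i\in\delta\in acc(\kappa)\setminus\sigma$, of a cofinal subset $C^i_\delta$ of $(P_\sigma(\delta),\subseteq)$ such that $\{\delta : \exists i<\delta\,(C^i_\delta\subseteq D)\}\in J^+$ for every generalized club $D\subseteq P_\sigma(\kappa)$. *)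

theory Defs
  imports Main "HOL-Library.Countable_Set"
begin

text \<open>Ordinals below the regular cardinal kappa are represented by the elements of a
wellordered type 'k whose order type is kappa.  The ordinal alpha < kappa is identified
with the set of its predecessors {..<alpha}; kappa itself with UNIV.\<close>

definition card_less :: "'a set \<Rightarrow> 'b set \<Rightarrow> bool" where
  "card_less A B \<longleftrightarrow> (card_of A, card_of B) \<in> ordLess"

definition regular_uncountable :: "'k::wellorder itself \<Rightarrow> bool" where
  "regular_uncountable _ \<longleftrightarrow>
     \<not> countable (UNIV :: 'k set) \<and>
     (\<forall>a::'k. card_less {..<a} (UNIV :: 'k set)) \<and>
     (\<forall>A::'k set. card_less A (UNIV :: 'k set) \<longrightarrow> (\<exists>b. \<forall>a\<in>A. a < b))"

definition is_cardinal :: "'k::wellorder \<Rightarrow> bool" where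
  "is_cardinal \<sigma> \<longleftrightarrow> (\<forall>\<beta><\<sigma>. card_less {..<\<beta>} {..<\<sigma>})"

definition infinite_cardinal :: "'k::wellorder \<Rightarrow> bool" where
  "infinite_cardinal \<sigma> \<longleftrightarrow> is_cardinal \<sigma> \<and> infinite {..<\<sigma>}"

definition bounded :: "'k::wellorder set \<Rightarrow> bool" where
  "bounded A \<longleftrightarrow> (\<exists>b. \<forall>a\<in>A. a < b)"

definition ideal_on :: "'k::wellorder set set \<Rightarrow> bool" where
  "ideal_on J \<longleftrightarrow> J \<noteq> {} \<and> UNIV \<notin> J \<and>
     (\<forall>A. bounded A \<longrightarrow> A \<in> J) \<and>
     (\<forall>A B. A \<in> J \<and> B \<subseteq> A \<longrightarrow> B \<in> J) \<and>
     (\<forall>A B. A \<in> J \<and> B \<in> J \<longrightarrow> A \<union> B \<in> J)"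

definition kappa_complete :: "'k::wellorder set set \<Rightarrow> bool" where
  "kappa_complete J \<longleftrightarrow>
     (\<forall>F. F \<subseteq> J \<and> card_less F (UNIV :: 'k set) \<longrightarrow> \<Union>F \<in> J)"

definition limit_ord :: "'k::wellorder \<Rightarrow> bool" where
  "limit_ord \<delta> \<longleftrightarrow> (\<exists>\<beta>. \<beta> < \<delta>) \<and> (\<forall>\<beta><\<delta>. \<exists>\<gamma>. \<beta> < \<gamma> \<and> \<gamma> < \<delta>)"

definition Psig :: "'k::wellorder \<Rightarrow> 'k set \<Rightarrow> 'k set set" where
  "Psig \<sigma> X = {x. x \<subseteq> X \<and> card_less x {..<\<sigma>}}"

definition gen_club :: "'k::wellorder \<Rightarrow> 'k set \<Rightarrow> 'k set set \<Rightarrow> bool" where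
  "gen_club \<sigma> X C \<longleftrightarrow> C \<subseteq> Psig \<sigma> X \<and>
     (\<exists>F. (\<forall>s. finite s \<and> s \<subseteq> X \<longrightarrow> F s \<in> X) \<and>
          {x \<in> Psig \<sigma> X. \<forall>s. finite s \<and> s \<subseteq> x \<longrightarrow> F s \<in> x} \<subseteq> C)"

definition curlywedge_minus :: "'k::wellorder \<Rightarrow> 'k set set \<Rightarrow> bool" where
  "curlywedge_minus \<sigma> J \<longleftrightarrow>
     (\<exists>C :: 'k \<Rightarrow> 'k \<Rightarrow> 'k set set.
        (\<forall>\<delta> i. limit_ord \<delta> \<and> \<sigma> \<le> \<delta> \<and> i < \<delta> \<longrightarrow>
           C i \<delta> \<subseteq> Psig \<sigma> {..<\<delta>} \<and>
           (\<forall>x\<in>Psig \<sigma> {..<\<delta>}. \<exists>y\<in>C i \<delta>. x \<subseteq> y)) \<and>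
        (\<forall>D. gen_club \<sigma> UNIV D \<longrightarrow>
           {\<delta>. limit_ord \<delta> \<and> \<sigma> \<le> \<delta> \<and> (\<exists>i<\<delta>. C i \<delta> \<subseteq> D)} \<notin> J))"

end

theory Submission
  imports Defs
begin

unbundle cardinal_syntax

lemma fin_less_inf:
  assumes "finite A" "infinite B" shows "card_of A <o card_of B"
proof -
  have "\<not> card_of B \<le>o card_of A" using card_of_ordLeq_finite assms by blast
  then show ?thesis using not_ordLeq_iff_ordLess[OF card_of_Well_order card_of_Well_order] by blast
qed

lemma lists_len_card:
  assumes "infinite A"
  shows "card_of ({xs. set xs \<subseteq> A \<and> length xs = n}) \<le>o card_of (A)"
proof (induction n)
  case 0
  from assms have "A \<noteq> {}" by (rule infinite_imp_nonempty)
  then obtain a where "a \<in> A" by blast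
  have e: "{xs. set xs \<subseteq> A \<and> length xs = 0} = {[]}" by auto
  have "card_of ({[]::'a list}) \<le>o card_of (A)"
  proof (rule card_of_ordLeqI[where f="\<lambda>_. a"])
    show "inj_on (\<lambda>_. a) {[]::'a list}" by simp
    show "\<And>x. x \<in> {[]} \<Longrightarrow> a \<in> A" using \<open>a \<in> A\<close> by simp
  qed
  then show ?case by (simp only: e)
next
  case (Suc n)
  let ?L = "{xs. set xs \<subseteq> A \<and> length xs = n}"
  have a: "card_of ({xs. set xs \<subseteq> A \<and> length xs = Suc n}) \<le>o card_of (A \<times> ?L)"
  proof (rule card_of_ordLeqI[where f="\<lambda>xs. (hd xs, tl xs)"])
    show "inj_on (\<lambda>xs. (hd xs, tl xs)) {xs. set xs \<subseteq> A \<and> length xs = Suc n}"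
    proof (rule inj_onI)
      fix xs ys
      assume x: "xs \<in> {xs. set xs \<subseteq> A \<and> length xs = Suc n}"
        and y: "ys \<in> {xs. set xs \<subseteq> A \<and> length xs = Suc n}"
        and e: "(hd xs, tl xs) = (hd ys, tl ys)"
      from x have "xs \<noteq> []" by auto
      moreover from y have "ys \<noteq> []" by auto
      ultimately show "xs = ys" using e by (metis list.collapse prod.inject)
    qed
  next
    fix xs assume "xs \<in> {xs. set xs \<subseteq> A \<and> length xs = Suc n}"
    then show "(hd xs, tl xs) \<in> A \<times> ?L"
      by (auto simp: length_Suc_conv)
  qed
  have b: "card_of (A \<times> ?L) \<le>o card_of (A)"
    by (rule card_of_Times_ordLeq_infinite_Field[OF _ ordLeq_refl[OF card_of_Card_order] Suc card_of_Card_order])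
       (simp only: Field_card_of assms not_False_eq_True)
  show ?case by (rule ordLeq_transitive[OF a b])
qed

lemma fin_subsets_card:
  assumes "infinite A"
  shows "card_of ({s. finite s \<and> s \<subseteq> A}) \<le>o card_of (A)"
proof -
  let ?U = "\<Union>n. {xs. set xs \<subseteq> A \<and> length xs = n}"
  have U: "card_of (?U) \<le>o card_of (A)"
    apply (rule card_of_UNION_ordLeq_infinite[OF assms])
    using infinite_iff_card_of_nat assms apply blast
    using lists_len_card[OF assms] by blast
  have "{s. finite s \<and> s \<subseteq> A} \<subseteq> set ` ?U"
  proof
    fix s assume "s \<in> {s. finite s \<and> s \<subseteq> A}"
    then obtain xs where "set xs = s" "s \<subseteq> A" using finite_list by auto
    then show "s \<in> set ` ?U" by auto
  qed
  then have a: "card_of ({s. finite s \<and> s \<subseteq> A}) \<le>o card_of (set ` ?U)" by (rule card_of_mono1)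
  have b: "card_of (set ` ?U) \<le>o card_of (?U)" by (rule card_of_image)
  show ?thesis
    by (rule ordLeq_transitive[OF ordLeq_transitive[OF a b] U])
qed

lemma cofinal:
  assumes infV: "infinite V" and VW: "card_of (V) <o card_of (W)"
    and cof: "\<forall>s. finite s \<and> s \<subseteq> X \<longrightarrow> (\<exists>c\<in>CC. s \<subseteq> c)"
    and CCsub: "\<forall>c\<in>CC. c \<subseteq> X \<and> card_of (c) <o card_of (V)"
    and VX: "V \<subseteq> X" and xX: "x \<subseteq> X" and xW: "card_of (x) <o card_of (W)"
  shows "\<exists>y. x \<subseteq> y \<and> y \<subseteq> X \<and> card_of (y) <o card_of (W) \<and>
            (\<forall>s. finite s \<and> s \<subseteq> y \<longrightarrow> (\<exists>c\<in>CC. s \<subseteq> c \<and> c \<subseteq> y))"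
proof -
  define cs where "cs s = (SOME c. c \<in> CC \<and> s \<subseteq> c)" for s
  have cs: "cs s \<in> CC \<and> s \<subseteq> cs s" if "finite s" "s \<subseteq> X" for s
    unfolding cs_def by (rule someI_ex) (use cof that in blast)
  define g where "g A = A \<union> (\<Union>s\<in>{s. finite s \<and> s \<subseteq> A}. cs s)" for A
  define M where "M = x \<union> V"
  define xn where "xn n = (g ^^ n) M" for n
  have infW: "infinite W"
    using VW infV by (meson card_of_ordLeq_infinite ordLess_imp_ordLeq)
  have MW: "card_of (M) <o card_of (W)" unfolding M_def
    using card_of_Un_ordLess_infinite infW xW VW by blast
  have infM: "infinite M" unfolding M_def using infV by auto
  have inv: "M \<subseteq> xn n \<and> xn n \<subseteq> X \<and> card_of (xn n) \<le>o card_of (M)" for n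
  proof (induction n)
    case 0
    have "card_of (M) \<le>o card_of (M)" by (rule ordLeq_refl[OF card_of_Card_order])
    then show ?case unfolding xn_def M_def using VX xX by simp
  next
    case (Suc n)
    let ?A = "xn n"
    have eq: "xn (Suc n) = g ?A" unfolding xn_def by simp
    have infA: "infinite ?A" using Suc infM finite_subset by blast
    have sub: "g ?A \<subseteq> X" unfolding g_def
    proof (intro Un_least UN_least)
      show "?A \<subseteq> X" using Suc by blast
      fix s assume "s \<in> {s. finite s \<and> s \<subseteq> ?A}"
      then have "cs s \<in> CC" using cs[of s] Suc by blast
      then show "cs s \<subseteq> X" using CCsub by blast
    qed
    have "card_of (\<Union>s\<in>{s. finite s \<and> s \<subseteq> ?A}. cs s) \<le>o card_of (M)"
    proof (rule card_of_UNION_ordLeq_infinite[OF infM])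
      show "card_of ({s. finite s \<and> s \<subseteq> ?A}) \<le>o card_of (M)"
        using fin_subsets_card[OF infA] Suc ordLeq_transitive by blast
      show "\<forall>i\<in>{s. finite s \<and> s \<subseteq> ?A}. card_of (cs i) \<le>o card_of (M)"
      proof
        fix s assume "s \<in> {s. finite s \<and> s \<subseteq> ?A}"
        then have "cs s \<in> CC" using cs Suc by blast
        then have "card_of (cs s) <o card_of (V)" using CCsub by blast
        moreover have "card_of (V) \<le>o card_of (M)" unfolding M_def by (rule card_of_mono1) blast
        ultimately show "card_of (cs s) \<le>o card_of (M)" using ordLess_ordLeq_trans ordLess_imp_ordLeq by blast
      qed
    qed
    then have "card_of (g ?A) \<le>o card_of (M)" unfolding g_def
      apply -
      apply (rule card_of_Un_ordLeq_infinite_Field)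
      using Suc infM by (auto simp only: Field_card_of card_of_Card_order card_of_card_order_on)
    moreover have "M \<subseteq> g ?A" unfolding g_def using Suc by blast
    ultimately show ?case using eq sub by simp
  qed
  have step: "xn n \<subseteq> xn (Suc n)" for n
    unfolding xn_def g_def by auto
  have mono: "m \<le> n \<Longrightarrow> xn m \<subseteq> xn n" for m n
    using lift_Suc_mono_le[of xn, OF step] by blast
  define y where "y = (\<Union>n. xn n)"
  have yM: "card_of (y) \<le>o card_of (M)" unfolding y_def
    apply (rule card_of_UNION_ordLeq_infinite[OF infM])
    using infinite_iff_card_of_nat infM apply blast
    using inv by blast
  have fin: "finite s \<Longrightarrow> s \<subseteq> y \<Longrightarrow> \<exists>n. s \<subseteq> xn n" for s
  proof (induction s rule: finite_induct)
    case empty then show ?case by auto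
  next
    case (insert a F)
    then obtain n where n: "F \<subseteq> xn n" by auto
    from insert obtain m where m: "a \<in> xn m" unfolding y_def by auto
    have "insert a F \<subseteq> xn (max n m)" using n m mono[of n "max n m"] mono[of m "max n m"] by auto
    then show ?case by blast
  qed
  have "x \<subseteq> y" unfolding y_def using inv[of 0] M_def by auto
  moreover have "y \<subseteq> X" unfolding y_def using inv by blast
  moreover have "card_of (y) <o card_of (W)" using yM MW ordLeq_ordLess_trans by blast
  moreover have "\<forall>s. finite s \<and> s \<subseteq> y \<longrightarrow> (\<exists>c\<in>CC. s \<subseteq> c \<and> c \<subseteq> y)"
  proof (intro allI impI)
    fix s assume s: "finite s \<and> s \<subseteq> y"
    then obtain n where n: "s \<subseteq> xn n" using fin by blast
    have sX: "s \<subseteq> X" using n inv by blast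
    have "cs s \<subseteq> g (xn n)" unfolding g_def using s n by blast
    then have "cs s \<subseteq> xn (Suc n)" by (simp add: xn_def)
    then have "cs s \<subseteq> y" unfolding y_def by blast
    then show "\<exists>c\<in>CC. s \<subseteq> c \<and> c \<subseteq> y" using cs[of s] s sX by blast
  qed
  ultimately show ?thesis by blast
qed

theorem corollary4p5:
  fixes J :: "'k::wellorder set set" and \<sigma> \<sigma>' :: 'k
  assumes "regular_uncountable TYPE('k)"
    and "ideal_on J" and "kappa_complete J"
    and "infinite_cardinal \<sigma>"
    and "curlywedge_minus \<sigma> J"
    and "is_cardinal \<sigma>'" and "\<sigma> \<le> \<sigma>'"
  shows "curlywedge_minus \<sigma>' J"
proof -
  from assms(5) obtain C :: "'k \<Rightarrow> 'k \<Rightarrow> 'k set set" where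
    C1: "\<forall>\<delta> i. limit_ord \<delta> \<and> \<sigma> \<le> \<delta> \<and> i < \<delta> \<longrightarrow>
           C i \<delta> \<subseteq> Psig \<sigma> {..<\<delta>} \<and> (\<forall>x\<in>Psig \<sigma> {..<\<delta>}. \<exists>y\<in>C i \<delta>. x \<subseteq> y)"
    and C2: "\<forall>D. gen_club \<sigma> UNIV D \<longrightarrow>
           {\<delta>. limit_ord \<delta> \<and> \<sigma> \<le> \<delta> \<and> (\<exists>i<\<delta>. C i \<delta> \<subseteq> D)} \<notin> J"
    unfolding curlywedge_minus_def by blast
  show ?thesis
  proof (cases "\<sigma> = \<sigma>'")
    case True then show ?thesis using assms(5) by simp
  next
    case False
    then have lt: "\<sigma> < \<sigma>'" using assms(7) by simp
    have VW: "card_of {..<\<sigma>} <o card_of {..<\<sigma>'}"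
      using assms(6) lt unfolding is_cardinal_def card_less_def by blast
    have infV: "infinite {..<\<sigma>}" using assms(4) unfolding infinite_cardinal_def by blast
    define C' where "C' i \<delta> = {y \<in> Psig \<sigma>' {..<\<delta>}. \<forall>s. finite s \<and> s \<subseteq> y \<longrightarrow> (\<exists>c\<in>C i \<delta>. s \<subseteq> c \<and> c \<subseteq> y)}"
      for i \<delta>
    show ?thesis unfolding curlywedge_minus_def
    proof (intro exI[of _ C'] conjI allI impI)
      fix \<delta> i assume h: "limit_ord \<delta> \<and> \<sigma>' \<le> \<delta> \<and> i < \<delta>"
      then have h': "limit_ord \<delta> \<and> \<sigma> \<le> \<delta> \<and> i < \<delta>" using lt by auto
      show "C' i \<delta> \<subseteq> Psig \<sigma>' {..<\<delta>}" unfolding C'_def by blast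
      show "\<forall>x\<in>Psig \<sigma>' {..<\<delta>}. \<exists>y\<in>C' i \<delta>. x \<subseteq> y"
      proof
        fix x assume x: "x \<in> Psig \<sigma>' {..<\<delta>}"
        have cof: "\<forall>s. finite s \<and> s \<subseteq> {..<\<delta>} \<longrightarrow> (\<exists>c\<in>C i \<delta>. s \<subseteq> c)"
        proof (intro allI impI)
          fix s assume s: "finite s \<and> s \<subseteq> {..<\<delta>}"
          have "card_of s <o card_of {..<\<sigma>}" using fin_less_inf s infV by blast
          then have "s \<in> Psig \<sigma> {..<\<delta>}" using s unfolding Psig_def card_less_def by simp
          then show "\<exists>c\<in>C i \<delta>. s \<subseteq> c" using C1 h' by blast
        qed
        have CCsub: "\<forall>c\<in>C i \<delta>. c \<subseteq> {..<\<delta>} \<and> card_of c <o card_of {..<\<sigma>}"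
          using C1 h' unfolding Psig_def card_less_def by blast
        have VX: "{..<\<sigma>} \<subseteq> {..<\<delta>}" using h' by auto
        from x have xX: "x \<subseteq> {..<\<delta>}" and xW: "card_of x <o card_of {..<\<sigma>'}"
          unfolding Psig_def card_less_def by auto
        obtain y where y: "x \<subseteq> y" "y \<subseteq> {..<\<delta>}" "card_of y <o card_of {..<\<sigma>'}"
          "\<forall>s. finite s \<and> s \<subseteq> y \<longrightarrow> (\<exists>c\<in>C i \<delta>. s \<subseteq> c \<and> c \<subseteq> y)"
          using cofinal[OF infV VW cof CCsub VX xX xW] by blast
        then have "y \<in> C' i \<delta>" unfolding C'_def Psig_def card_less_def by blast
        then show "\<exists>y\<in>C' i \<delta>. x \<subseteq> y" using y(1) by blast
      qed
    next
      fix D assume D: "gen_club \<sigma>' UNIV D"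
      then obtain F where F: "{x \<in> Psig \<sigma>' UNIV. \<forall>s. finite s \<and> s \<subseteq> x \<longrightarrow> F s \<in> x} \<subseteq> D"
        unfolding gen_club_def by blast
      define D0 where "D0 = {x \<in> Psig \<sigma> UNIV. \<forall>s. finite s \<and> s \<subseteq> x \<longrightarrow> F s \<in> x}"
      have "gen_club \<sigma> UNIV D0" unfolding gen_club_def D0_def by blast
      then have S: "{\<delta>. limit_ord \<delta> \<and> \<sigma> \<le> \<delta> \<and> (\<exists>i<\<delta>. C i \<delta> \<subseteq> D0)} \<notin> J" using C2 by blast
      let ?S = "{\<delta>. limit_ord \<delta> \<and> \<sigma> \<le> \<delta> \<and> (\<exists>i<\<delta>. C i \<delta> \<subseteq> D0)}"
      let ?T = "{\<delta>. limit_ord \<delta> \<and> \<sigma>' \<le> \<delta> \<and> (\<exists>i<\<delta>. C' i \<delta> \<subseteq> D)}"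
      have sub: "?S \<subseteq> ?T \<union> {..<\<sigma>'}"
      proof
        fix \<delta> assume "\<delta> \<in> ?S"
        then obtain i where d: "limit_ord \<delta>" "\<sigma> \<le> \<delta>" "i < \<delta>" "C i \<delta> \<subseteq> D0" by blast
        show "\<delta> \<in> ?T \<union> {..<\<sigma>'}"
        proof (cases "\<sigma>' \<le> \<delta>")
          case False then show ?thesis by auto
        next
          case True
          have "C' i \<delta> \<subseteq> D"
          proof
            fix y assume y: "y \<in> C' i \<delta>"
            have "y \<in> Psig \<sigma>' UNIV" using y unfolding C'_def Psig_def by blast
            moreover have "\<forall>s. finite s \<and> s \<subseteq> y \<longrightarrow> F s \<in> y"
            proof (intro allI impI)
              fix s assume s: "finite s \<and> s \<subseteq> y"
              then obtain c where c: "c \<in> C i \<delta>" "s \<subseteq> c" "c \<subseteq> y" using y unfolding C'_def by blast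
              then have "c \<in> D0" using d by blast
              then have "F s \<in> c" using s c unfolding D0_def by blast
              then show "F s \<in> y" using c by blast
            qed
            ultimately show "y \<in> D" using F by blast
          qed
          then show ?thesis using d True by blast
        qed
      qed
      show "?T \<notin> J"
      proof
        assume T: "?T \<in> J"
        have "bounded {..<\<sigma>'}" unfolding bounded_def by blast
        then have "{..<\<sigma>'} \<in> J" using assms(2) unfolding ideal_on_def by blast
        then have "?T \<union> {..<\<sigma>'} \<in> J" using T assms(2) unfolding ideal_on_def by blast
        then have "?S \<in> J" using sub assms(2) unfolding ideal_on_def by blast
        then show False using S by blast
      qed
    qed
  qed
qed

end
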